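(* Let $G$ be a $\lambda$-graph and $Q$ a query over $G$. Then $Q^{\Downarrow}$ is a bisimulation if and only if there exists a bisimulation on the nodes of $G$ containing $Q$.
   Context: A pre-$\lambda$-graph is a directed graph whose nodes are of four kinds: an application node $@(n_1,n_2)$ has exactly two children, its left child $n_1$ and its right child $n_2$; an abstraction node $\lambda(n)$ has exactly one child, its body $n$; a free variable node has no children and carries an atom $\mathrm{id}(n)$ from a fixed set of atoms, distinct free variable nodes carrying distinct atoms; a bound variable node $\mathrm{var}(l)$ has exactly one outgoing binding edge, to an abstraction node $l$ (its binder). A trace is a finite sequence of directions from $\{\swarrow,\downarrow,\searrow\}$; $\epsilon$ is the empty trace and $d\cdot\tau$ is the trace $\tau$ extended by one final step $d$. Paths $n\xrightarrow{\tau}m$ are defined inductively: $n\xrightarrow{\epsilon}n$; if $n\xrightarrow{\tau}\lambda(m)$ then $n\xrightarrow{\downarrow\cdot\tau}m$; if $n\xrightarrow{\tau}@(m_1,m_2)$ then $n\xrightarrow{\swarrow\cdot\tau}m_1$ and $n\xrightarrow{\searrow\cdot\tau}m_2$ (binding edges are never followed). The path $n\xrightarrow{\tau}$ crosses a node $m$ if either $n\xrightarrow{\tau}m$, or $\tau=d\cdot\tau'$ and $n\xrightarrow{\tau'}$ crosses $m$. A root is a node $r$ such that the only path ending in $r$ has the empty trace. A node $m$ dominates $n$ if every path from a root to $n$ crosses $m$. A $\lambda$-graph is a pre-$\lambda$-graph that has finitely many nodes, is acyclic ($n\xrightarrow{\tau}n$ holds only for $\tau=\epsilon$), and is dominated (every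 bound variable node $\mathrm{var}(l)$ is dominated by its binder $l$). Two nodes are homogeneous if both are application nodes, or both abstraction nodes, or both free variable nodes, or both bound variable nodes; a binary relation $R$ on nodes is homogeneous if it only relates homogeneous nodes. Rules: $(\swarrow)$: $@(n_1,n_2)\,R\,@(m_1,m_2)$ implies $n_1\,R\,m_1$; $(\searrow)$: $@(n_1,n_2)\,R\,@(m_1,m_2)$ implies $n_2\,R\,m_2$; $(\downarrow)$: $\lambda(n)\,R\,\lambda(m)$ implies $n\,R\,m$; $(\circlearrowright)$: $\mathrm{var}(n)\,R\,\mathrm{var}(m)$ implies $n\,R\,m$. $R$ is propagated if closed under $(\swarrow),(\downarrow),(\searrow)$. A bisimulation is a homogeneous propagated relation closed also under $(\circlearrowright)$. $R^{\Downarrow}$ (propagation) is the smallest propagated relation containing $R$. A query over $G$ is a binary relation on the roots of $G$. *)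

theory Defs
  imports Main
begin

text \<open>Node kinds: application with left/right child, abstraction with body,
free variable carrying an atom, bound variable with its binder.\<close>
datatype ('n, 'a) nkind = App 'n 'n | Abs 'n | FreeV 'a | BVar 'n

record ('n, 'a) pregraph =
  nodes :: "'n set"
  lab   :: "'n \<Rightarrow> ('n, 'a) nkind"

datatype dir = SW | Down | SE

text \<open>A trace is a list; the head is the final step, so \<open>d # \<tau>\<close> is \<open>d\<cdot>\<tau>\<close>.\<close>
type_synonym trace = "dir list"

definition pre_lambda_graph :: "('n, 'a) pregraph \<Rightarrow> bool" where
  "pre_lambda_graph G \<longleftrightarrow>
     (\<forall>n\<in>nodes G. case lab G n of
         App n1 n2 \<Rightarrow> n1 \<in> nodes G \<and> n2 \<in> nodes G
       | Abs m \<Rightarrow> m \<in> nodes G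
       | FreeV x \<Rightarrow> True
       | BVar l \<Rightarrow> l \<in> nodes G \<and> (\<exists>b. lab G l = Abs b)) \<and>
     (\<forall>n\<in>nodes G. \<forall>m\<in>nodes G. \<forall>x. lab G n = FreeV x \<and> lab G m = FreeV x \<longrightarrow> n = m)"

inductive path :: "('n, 'a) pregraph \<Rightarrow> 'n \<Rightarrow> trace \<Rightarrow> 'n \<Rightarrow> bool" for G where
  eps: "n \<in> nodes G \<Longrightarrow> path G n [] n"
| down: "path G n \<tau> l \<Longrightarrow> lab G l = Abs m \<Longrightarrow> path G n (Down # \<tau>) m"
| sw: "path G n \<tau> l \<Longrightarrow> lab G l = App m1 m2 \<Longrightarrow> path G n (SW # \<tau>) m1"
| se: "path G n \<tau> l \<Longrightarrow> lab G l = App m1 m2 \<Longrightarrow> path G n (SE # \<tau>) m2"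

fun crosses :: "('n, 'a) pregraph \<Rightarrow> 'n \<Rightarrow> trace \<Rightarrow> 'n \<Rightarrow> bool" where
  "crosses G n [] m \<longleftrightarrow> path G n [] m"
| "crosses G n (d # \<tau>) m \<longleftrightarrow> path G n (d # \<tau>) m \<or> crosses G n \<tau> m"

definition is_root :: "('n, 'a) pregraph \<Rightarrow> 'n \<Rightarrow> bool" where
  "is_root G r \<longleftrightarrow> r \<in> nodes G \<and> (\<forall>n \<tau>. path G n \<tau> r \<longrightarrow> \<tau> = [])"

definition dominates :: "('n, 'a) pregraph \<Rightarrow> 'n \<Rightarrow> 'n \<Rightarrow> bool" where
  "dominates G m n \<longleftrightarrow> (\<forall>r \<tau>. is_root G r \<and> path G r \<tau> n \<longrightarrow> crosses G r \<tau> m)"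

definition lambda_graph :: "('n, 'a) pregraph \<Rightarrow> bool" where
  "lambda_graph G \<longleftrightarrow> pre_lambda_graph G \<and> finite (nodes G) \<and>
     (\<forall>n \<tau>. path G n \<tau> n \<longrightarrow> \<tau> = []) \<and>
     (\<forall>n\<in>nodes G. \<forall>l. lab G n = BVar l \<longrightarrow> dominates G l n)"

fun homog_kind :: "('n, 'a) nkind \<Rightarrow> ('n, 'a) nkind \<Rightarrow> bool" where
  "homog_kind (App _ _) (App _ _) = True"
| "homog_kind (Abs _) (Abs _) = True"
| "homog_kind (FreeV _) (FreeV _) = True"
| "homog_kind (BVar _) (BVar _) = True"
| "homog_kind _ _ = False"

definition homogeneous :: "('n, 'a) pregraph \<Rightarrow> ('n \<times> 'n) set \<Rightarrow> bool" where
  "homogeneous G R \<longleftrightarrow> (\<forall>(n, m)\<in>R. homog_kind (lab G n) (lab G m))"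

definition propagated :: "('n, 'a) pregraph \<Rightarrow> ('n \<times> 'n) set \<Rightarrow> bool" where
  "propagated G R \<longleftrightarrow>
     (\<forall>n m n1 n2 m1 m2. (n, m) \<in> R \<and> lab G n = App n1 n2 \<and> lab G m = App m1 m2
         \<longrightarrow> (n1, m1) \<in> R \<and> (n2, m2) \<in> R) \<and>
     (\<forall>n m n' m'. (n, m) \<in> R \<and> lab G n = Abs n' \<and> lab G m = Abs m' \<longrightarrow> (n', m') \<in> R)"

definition bisimulation :: "('n, 'a) pregraph \<Rightarrow> ('n \<times> 'n) set \<Rightarrow> bool" where
  "bisimulation G R \<longleftrightarrow> homogeneous G R \<and> propagated G R \<and>
     (\<forall>n m l k. (n, m) \<in> R \<and> lab G n = BVar l \<and> lab G m = BVar k \<longrightarrow> (l, k) \<in> R)"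

text \<open>Propagation \<open>R\<^sup>\<Down>\<close>: the smallest propagated relation containing R.\<close>
inductive_set propagation :: "('n, 'a) pregraph \<Rightarrow> ('n \<times> 'n) set \<Rightarrow> ('n \<times> 'n) set"
  for G R where
  base: "p \<in> R \<Longrightarrow> p \<in> propagation G R"
| sw: "(n, m) \<in> propagation G R \<Longrightarrow> lab G n = App n1 n2 \<Longrightarrow> lab G m = App m1 m2
        \<Longrightarrow> (n1, m1) \<in> propagation G R"
| se: "(n, m) \<in> propagation G R \<Longrightarrow> lab G n = App n1 n2 \<Longrightarrow> lab G m = App m1 m2
        \<Longrightarrow> (n2, m2) \<in> propagation G R"
| down: "(n, m) \<in> propagation G R \<Longrightarrow> lab G n = Abs n' \<Longrightarrow> lab G m = Abs m'
        \<Longrightarrow> (n', m') \<in> propagation G R"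

definition is_query :: "('n, 'a) pregraph \<Rightarrow> ('n \<times> 'n) set \<Rightarrow> bool" where
  "is_query G Q \<longleftrightarrow> (\<forall>(r, s)\<in>Q. is_root G r \<and> is_root G s)"

end

theory Submission
  imports Defs
begin

lemma pre_child:
  assumes "pre_lambda_graph G" "l \<in> nodes G"
  shows "(lab G l = Abs m \<longrightarrow> m \<in> nodes G) \<and> (lab G l = App m1 m2 \<longrightarrow> m1 \<in> nodes G \<and> m2 \<in> nodes G)"
proof -
  have "case lab G l of App n1 n2 \<Rightarrow> n1 \<in> nodes G \<and> n2 \<in> nodes G
       | Abs m \<Rightarrow> m \<in> nodes G
       | FreeV x \<Rightarrow> True
       | BVar l \<Rightarrow> l \<in> nodes G \<and> (\<exists>b. lab G l = Abs b)"
    using assms unfolding pre_lambda_graph_def by blast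
  then show ?thesis by (cases "lab G l") auto
qed

lemma path_nodes:
  assumes "pre_lambda_graph G" "path G a t b"
  shows "a \<in> nodes G \<and> b \<in> nodes G"
  using assms(2)
  by induction (use pre_child[OF assms(1)] in blast)+

lemma path_comp:
  "path G b r c \<Longrightarrow> path G a s b \<Longrightarrow> path G a (r @ s) c"
  by (induction rule: path.induct) (auto intro: path.down path.sw path.se)

lemma path_decomp:
  assumes "pre_lambda_graph G"
  shows "path G a (r @ s) c \<Longrightarrow> \<exists>b. path G a s b \<and> path G b r c"
proof (induction r arbitrary: c)
  case Nil
  then show ?case using path_nodes[OF assms, of a s c] by (auto intro: path.eps)
next
  case (Cons d r)
  from Cons.prems show ?case
  proof cases
    case eps then show ?thesis by simp
  next
    case (down \<tau> l)
    with Cons.IH obtain b where "path G a s b" "path G b r l" by auto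
    then show ?thesis using down by (auto intro: path.down)
  next
    case (sw \<tau> l m2)
    with Cons.IH obtain b where "path G a s b" "path G b r l" by auto
    then show ?thesis using sw by (auto intro: path.sw)
  next
    case (se \<tau> l m1)
    with Cons.IH obtain b where "path G a s b" "path G b r l" by auto
    then show ?thesis using se by (auto intro: path.se)
  qed
qed

lemma path_det:
  "path G a t b \<Longrightarrow> path G a t c \<Longrightarrow> b = c"
proof (induction arbitrary: c rule: path.induct)
  case (eps n) from eps.prems show ?case by (cases rule: path.cases) auto
next
  case (down n \<tau> l m)
  from down.prems show ?case by (cases rule: path.cases) (use down in auto)
next
  case (sw n \<tau> l m1 m2)
  from sw.prems show ?case by (cases rule: path.cases) (use sw in auto)
next
  case (se n \<tau> l m1 m2)
  from se.prems show ?case by (cases rule: path.cases) (use se in auto)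
qed

lemma crosses_path:
  "crosses G n t m \<Longrightarrow> \<exists>i\<le>length t. path G n (drop i t) m"
proof (induction t)
  case Nil then show ?case by auto
next
  case (Cons d t)
  show ?case
  proof (cases "path G n (d # t) m")
    case True then show ?thesis by (metis drop0 le0)
  next
    case False
    with Cons.prems have "crosses G n t m" by simp
    with Cons.IH obtain i where "i \<le> length t" "path G n (drop i t) m" by auto
    then show ?thesis by (intro exI[of _ "Suc i"]) auto
  qed
qed

lemma prop_char1_aux:
  assumes "Q \<subseteq> nodes G \<times> nodes G"
  shows "p \<in> propagation G Q \<Longrightarrow> \<exists>r s t. (r, s) \<in> Q \<and> path G r t (fst p) \<and> path G s t (snd p)"
proof (induction rule: propagation.induct)
  case (base p)
  then show ?case using assms by (cases p) (auto intro!: exI[of _ "[]"] path.eps)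
next
  case (sw n m n1 n2 m1 m2)
  then obtain r s t where "(r, s) \<in> Q" "path G r t n" "path G s t m" by auto
  then show ?case using sw path.sw[of G r t n n1 n2] path.sw[of G s t m m1 m2] by auto
next
  case (se n m n1 n2 m1 m2)
  then obtain r s t where "(r, s) \<in> Q" "path G r t n" "path G s t m" by auto
  then show ?case using se path.se[of G r t n n1 n2] path.se[of G s t m m1 m2] by auto
next
  case (down n m n' m')
  then obtain r s t where "(r, s) \<in> Q" "path G r t n" "path G s t m" by auto
  then show ?case using down path.down[of G r t n n'] path.down[of G s t m m'] by auto
qed

lemma prop_char1:
  assumes "Q \<subseteq> nodes G \<times> nodes G"
  shows "(n, m) \<in> propagation G Q \<Longrightarrow> \<exists>r s t. (r, s) \<in> Q \<and> path G r t n \<and> path G s t m"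
  using prop_char1_aux[OF assms, of "(n, m)"] by simp

lemma prop_char2:
  "path G a t n \<Longrightarrow> (a, b) \<in> propagation G Q \<Longrightarrow> path G b t m \<Longrightarrow> (n, m) \<in> propagation G Q"
proof (induction arbitrary: m rule: path.induct)
  case (eps n) from eps.prems(2) show ?case by (cases rule: path.cases) (use eps in simp_all)
next
  case (down n \<tau> l m')
  from down.prems(2) show ?case
  proof (cases rule: path.cases)
    case (down l')
    then have "(l, l') \<in> propagation G Q" using "down.IH"[OF "down.prems"(1)] by simp
    then show ?thesis using propagation.down[of l l' G Q m'] down "down.hyps" by simp
  qed
next
  case (sw n \<tau> l m1 m2)
  from sw.prems(2) show ?case
  proof (cases rule: path.cases)
    case (sw l' x)
    then have "(l, l') \<in> propagation G Q" using "sw.IH"[OF "sw.prems"(1)] by simp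
    then show ?thesis using propagation.sw[of l l' G Q m1 m2 m x] sw "sw.hyps" by simp
  qed
next
  case (se n \<tau> l m1 m2)
  from se.prems(2) show ?case
  proof (cases rule: path.cases)
    case (se l' x)
    then have "(l, l') \<in> propagation G Q" using "se.IH"[OF "se.prems"(1)] by simp
    then show ?thesis using propagation.se[of l l' G Q m1 m2 x m] se "se.hyps" by simp
  qed
qed

lemma homog_sym: "homog_kind x y \<Longrightarrow> homog_kind y x"
  by (induction x y rule: homog_kind.induct) simp_all

lemma lift_right:
  assumes "homogeneous G R" "propagated G R" "R \<subseteq> nodes G \<times> nodes G"
  shows "path G b t c \<Longrightarrow> (a, b) \<in> R \<Longrightarrow> \<exists>a'. path G a t a' \<and> (a', c) \<in> R"
proof (induction rule: path.induct)
  case (eps n)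
  then have "a \<in> nodes G" using assms(3) by blast
  then show ?case using eps path.eps[of a G] by blast
next
  case (down n \<tau> l m)
  then obtain a' where a': "path G a \<tau> a'" "(a', l) \<in> R" by blast
  then have "homog_kind (lab G a') (lab G l)" using assms(1) unfolding homogeneous_def by blast
  with down(2) obtain m' where m': "lab G a' = Abs m'" by (cases "lab G a'") simp_all
  then have "(m', m) \<in> R" using a'(2) down(2) assms(2) unfolding propagated_def by blast
  then show ?case using path.down[OF a'(1) m'] by blast
next
  case (sw n \<tau> l m1 m2)
  then obtain a' where a': "path G a \<tau> a'" "(a', l) \<in> R" by blast
  then have "homog_kind (lab G a') (lab G l)" using assms(1) unfolding homogeneous_def by blast
  with sw(2) obtain x y where m': "lab G a' = App x y" by (cases "lab G a'") simp_all
  then have "(x, m1) \<in> R" using a'(2) sw(2) assms(2) unfolding propagated_def by blast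
  then show ?case using path.sw[OF a'(1) m'] by blast
next
  case (se n \<tau> l m1 m2)
  then obtain a' where a': "path G a \<tau> a'" "(a', l) \<in> R" by blast
  then have "homog_kind (lab G a') (lab G l)" using assms(1) unfolding homogeneous_def by blast
  with se(2) obtain x y where m': "lab G a' = App x y" by (cases "lab G a'") simp_all
  then have "(y, m2) \<in> R" using a'(2) se(2) assms(2) unfolding propagated_def by blast
  then show ?case using path.se[OF a'(1) m'] by blast
qed

lemma conv_ok:
  assumes "homogeneous G R" "propagated G R" "R \<subseteq> nodes G \<times> nodes G"
  shows "homogeneous G (R\<inverse>)" "propagated G (R\<inverse>)" "R\<inverse> \<subseteq> nodes G \<times> nodes G"
proof -
  show "homogeneous G (R\<inverse>)" using assms(1) unfolding homogeneous_def
    using homog_sym by fastforce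
  show "propagated G (R\<inverse>)" using assms(2) unfolding propagated_def by blast
  show "R\<inverse> \<subseteq> nodes G \<times> nodes G" using assms(3) by blast
qed

lemma lift_left:
  assumes "homogeneous G R" "propagated G R" "R \<subseteq> nodes G \<times> nodes G"
  shows "path G a t a' \<Longrightarrow> (a, b) \<in> R \<Longrightarrow> \<exists>b'. path G b t b' \<and> (a', b') \<in> R"
  using lift_right[OF conv_ok[OF assms], of a t a' b] by auto

definition desc :: "('n, 'a) pregraph \<Rightarrow> 'n \<Rightarrow> 'n set" where
  "desc G b = {x. \<exists>s. path G b s x}"

lemma descent:
  assumes lg: "lambda_graph G" and R: "homogeneous G R" "propagated G R" "R \<subseteq> nodes G \<times> nodes G"
  shows "card (desc G b) = N \<Longrightarrow> (a, b) \<in> R \<Longrightarrow> (a, c) \<in> R \<Longrightarrow> path G b r c \<Longrightarrow> r \<noteq> [] \<Longrightarrow> False"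
proof (induction N arbitrary: a b c rule: less_induct)
  case (less N)
  have pre: "pre_lambda_graph G" and fin: "finite (nodes G)"
    and acyc: "\<And>n t. path G n t n \<Longrightarrow> t = []" using lg unfolding lambda_graph_def by auto
  obtain a1 where a1: "path G a r a1" "(a1, c) \<in> R" using lift_right[OF R less.prems(4) less.prems(2)] by auto
  obtain c1 where c1: "path G c r c1" "(a1, c1) \<in> R" using lift_left[OF R a1(1) less.prems(3)] by auto
  have sub: "desc G c \<subseteq> desc G b"
  proof
    fix x assume "x \<in> desc G c"
    then obtain s where "path G c s x" unfolding desc_def by blast
    then have "path G b (s @ r) x" using path_comp[OF _ less.prems(4)] by blast
    then show "x \<in> desc G b" unfolding desc_def by blast
  qed
  have "b \<in> desc G b" unfolding desc_def using path_nodes[OF pre less.prems(4)] by (auto intro: path.eps)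
  moreover have "b \<notin> desc G c"
  proof
    assume "b \<in> desc G c"
    then obtain s where "path G c s b" unfolding desc_def by auto
    then have "path G b (s @ r) b" using path_comp[OF _ less.prems(4)] by blast
    then show False using acyc less.prems(5) by blast
  qed
  moreover have "finite (desc G b)"
  proof (rule finite_subset[OF _ fin])
    show "desc G b \<subseteq> nodes G" unfolding desc_def using path_nodes[OF pre] by blast
  qed
  ultimately have "card (desc G c) < N" using sub less.prems(1)
    by (metis psubsetI psubset_card_mono)
  then show False using less.IH[OF _ refl a1(2) c1(2) c1(1) less.prems(5)] by blast
qed

theorem mainTheorem10:
  fixes G :: "('n, 'a) pregraph" and Q :: "('n \<times> 'n) set"
  assumes "lambda_graph G" and "is_query G Q"
  shows "bisimulation G (propagation G Q) \<longleftrightarrow>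
         (\<exists>R. R \<subseteq> nodes G \<times> nodes G \<and> Q \<subseteq> R \<and> bisimulation G R)"
proof -
  have pre: "pre_lambda_graph G" using assms(1) unfolding lambda_graph_def by auto
  have Qn: "Q \<subseteq> nodes G \<times> nodes G" using assms(2) unfolding is_query_def is_root_def by auto
  have Pn: "propagation G Q \<subseteq> nodes G \<times> nodes G"
  proof
    fix p assume "p \<in> propagation G Q"
    moreover obtain n m where p0: "p = (n, m)" by (cases p)
    ultimately have p: "p = (n, m)" "(n, m) \<in> propagation G Q" by simp_all
    then obtain r s t where "(r, s) \<in> Q" "path G r t n" "path G s t m" using prop_char1[OF Qn] by blast
    then show "p \<in> nodes G \<times> nodes G" using path_nodes[OF pre] p by auto
  qed
  have Pp: "propagated G (propagation G Q)" unfolding propagated_def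
    using propagation.sw[of _ _ G Q] propagation.se[of _ _ G Q] propagation.down[of _ _ G Q] by blast
  show ?thesis
  proof
    assume "bisimulation G (propagation G Q)"
    then show "\<exists>R. R \<subseteq> nodes G \<times> nodes G \<and> Q \<subseteq> R \<and> bisimulation G R"
      using Pn propagation.base[of _ Q G] by blast
  next
    assume "\<exists>R. R \<subseteq> nodes G \<times> nodes G \<and> Q \<subseteq> R \<and> bisimulation G R"
    then obtain R where Rn: "R \<subseteq> nodes G \<times> nodes G" and QR: "Q \<subseteq> R" and B: "bisimulation G R" by auto
    have Rh: "homogeneous G R" and Rp: "propagated G R"
      and Rv: "\<And>n m l k. (n, m) \<in> R \<Longrightarrow> lab G n = BVar l \<Longrightarrow> lab G m = BVar k \<Longrightarrow> (l, k) \<in> R"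
      using B unfolding bisimulation_def by auto
    have PR: "propagation G Q \<subseteq> R"
    proof
      fix p assume "p \<in> propagation G Q"
      then show "p \<in> R"
      proof induction
        case (base p) then show ?case using QR by blast
      next
        case (sw n m n1 n2 m1 m2) then show ?case using Rp unfolding propagated_def by blast
      next
        case (se n m n1 n2 m1 m2) then show ?case using Rp unfolding propagated_def by blast
      next
        case (down n m n' m') then show ?case using Rp unfolding propagated_def by blast
      qed
    qed
    have Ph: "homogeneous G (propagation G Q)" using Rh PR unfolding homogeneous_def by auto
    have Pv: "(l, k) \<in> propagation G Q"
      if nm: "(n, m) \<in> propagation G Q" "lab G n = BVar l" "lab G m = BVar k" for n m l k
    proof -
      obtain r s t where rs: "(r, s) \<in> Q" "path G r t n" "path G s t m" using prop_char1[OF Qn nm(1)] by blast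
      have roots: "is_root G r" "is_root G s" using assms(2) rs(1) unfolding is_query_def by auto
      have nn: "n \<in> nodes G" "m \<in> nodes G" using path_nodes[OF pre] rs by auto
      have "dominates G l n" "dominates G k m" using assms(1) nn nm unfolding lambda_graph_def by auto
      then have "crosses G r t l" "crosses G s t k" using roots rs unfolding dominates_def by auto
      then obtain i j where ij: "i \<le> length t" "path G r (drop i t) l" "j \<le> length t" "path G s (drop j t) k"
        using crosses_path by metis
      have tt: "\<And>q. t = take q t @ drop q t" by simp
      obtain x where x: "path G r (drop j t) x" using path_decomp[OF pre, of r "take j t" "drop j t" n] rs tt by metis
      obtain y where y: "path G s (drop i t) y" using path_decomp[OF pre, of s "take i t" "drop i t" m] rs tt by metis
      have rsP: "(r, s) \<in> propagation G Q" using rs(1) by (rule propagation.base)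
      have xk: "(x, k) \<in> propagation G Q" using prop_char2[OF x rsP ij(4)] .
      have ly: "(l, y) \<in> propagation G Q" using prop_char2[OF ij(2) rsP y] .
      have lk: "(l, k) \<in> R" using Rv[OF _ nm(2,3)] PR nm(1) by auto
      consider "i = j" | "j < i" | "i < j" by linarith
      then show ?thesis
      proof cases
        case 1 then show ?thesis using path_det[OF y] ij(4) ly by auto
      next
        case 2
        have e: "drop j t = take (i - j) (drop j t) @ drop i t"
          using 2 by (metis append_take_drop_id drop_drop le_add_diff_inverse2 less_imp_le)
        obtain y' where y': "path G s (drop i t) y'" "path G y' (take (i - j) (drop j t)) k"
          using path_decomp[OF pre, of s "take (i - j) (drop j t)" "drop i t" k] ij(4) e by metis
        have "y' = y" using path_det[OF y'(1) y] .
        moreover have "take (i - j) (drop j t) \<noteq> []" using 2 ij(1) by auto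
        ultimately have False using descent[OF assms(1) Rh Rp Rn refl, of l y k] ly PR lk y'(2) by blast
        then show ?thesis ..
      next
        case 3
        have e: "drop i t = take (j - i) (drop i t) @ drop j t"
          using 3 by (metis append_take_drop_id drop_drop le_add_diff_inverse2 less_imp_le)
        obtain x' where x': "path G r (drop j t) x'" "path G x' (take (j - i) (drop i t)) l"
          using path_decomp[OF pre, of r "take (j - i) (drop i t)" "drop j t" l] ij(2) e by metis
        have "x' = x" using path_det[OF x'(1) x] .
        moreover have "take (j - i) (drop i t) \<noteq> []" using 3 ij(3) by auto
        ultimately have False using descent[OF assms(1) conv_ok[OF Rh Rp Rn] refl, of k x l] xk PR lk x'(2) by blast
        then show ?thesis ..
      qed
    qed
    show "bisimulation G (propagation G Q)" unfolding bisimulation_def using Ph Pp Pv by blast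
  qed
qed

end
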